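(* Let $\mu$ be a partition of $k$ with $\ell(\mu)$ parts, $(S_1,S_2)$ a couple of pair-partitions of $[2k]$ of type $\mu$, and $G$ the group defined in the context. For each orbit $\Omega$ of the set of pair-partitions of $[2k]$ under the action of $G$ and any $S_0\in\Omega$, the quantity $\frac{2^{|\mathcal{L}(S_0,S_1)|}}{2^{\ell(\mu)}}\,|\Omega|$ is an integer.
   Context: Pair-partitions of $[2k]$ are sets of disjoint two-element subsets with union $[2k]$, identified with fixed-point-free involutions; $\sigma\in\mathfrak{S}_{2k}$ acts by: $\{\sigma(i),\sigma(j)\}\in\sigma\cdot P$ iff $\{i,j\}\in P$. $\mathcal{L}(A,B)$ is the bipartite graph with a black vertex per pair of $A$, a white vertex per pair of $B$, and an edge labeled $i$ for each $i\in[2k]$ joining the pairs containing $i$; it is a disjoint union of loops of lengths $2\ell_1\ge2\ell_2\ge\cdots$, $(\ell_1,\ell_2,\dots)$ is the type of $(A,B)$ and $|\mathcal{L}(A,B)|$ the number of loops. The group $G$: for each loop $L_i$ of $\mathcal{L}(S_1,S_2)$ (length $2\mu_i$) choose $j_{i,1}\in L_i$ and set $j_{i,2}=S_2(j_{i,1})$, $j_{i,3}=S_1(j_{i,2})$, $j_{i,4}=S_2(j_{i,3})$, alternately up to $j_{i,2\mu_i}$; let $r_i\in\mathfrak{S}_{2k}$ send $j_{i,m}$ to $j_{i,2\mu_i+1-m}$ for $m\in[2\mu_i]$ and fix all other elements; $G$ is the group generated by the $r_i$. *)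

theory Defs
  imports Complex_Main "HOL-Algebra.Sym_Groups" "HOL-Algebra.Generated_Groups" "HOL-Library.Multiset"
begin

text \<open>Pair-partitions of [2k], identified with fixed-point-free involutions of {1..2k}
  (extended by the identity outside {1..2k}).\<close>
definition pair_partition :: "nat \<Rightarrow> (nat \<Rightarrow> nat) \<Rightarrow> bool" where
  "pair_partition k P \<longleftrightarrow> P permutes {1..2*k} \<and> (\<forall>i\<in>{1..2*k}. P i \<noteq> i \<and> P (P i) = i)"

text \<open>Action of a permutation: {sigma i, sigma j} in sigma.P iff {i,j} in P.\<close>
definition pp_act :: "(nat \<Rightarrow> nat) \<Rightarrow> (nat \<Rightarrow> nat) \<Rightarrow> (nat \<Rightarrow> nat)" where
  "pp_act \<sigma> P = \<sigma> \<circ> P \<circ> Hilbert_Choice.inv \<sigma>"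

text \<open>Edges of the graph L(A,B) are labelled by [2k]; two labels are in the same loop
  iff they are connected via the pairs of A and B. Loops = sets of labels.\<close>
definition loop_edges :: "(nat \<Rightarrow> nat) \<Rightarrow> (nat \<Rightarrow> nat) \<Rightarrow> (nat \<times> nat) set" where
  "loop_edges A B = {(i, A i) | i. True} \<union> {(i, B i) | i. True}"

definition loops :: "nat \<Rightarrow> (nat \<Rightarrow> nat) \<Rightarrow> (nat \<Rightarrow> nat) \<Rightarrow> nat set set" where
  "loops k A B = {{j \<in> {1..2*k}. (i, j) \<in> (loop_edges A B)\<^sup>*} | i. i \<in> {1..2*k}}"

definition nloops :: "nat \<Rightarrow> (nat \<Rightarrow> nat) \<Rightarrow> (nat \<Rightarrow> nat) \<Rightarrow> nat" where
  "nloops k A B = card (loops k A B)"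

text \<open>Type of (A,B): multiset of half-lengths of loops (a loop with 2l labels has length 2l).\<close>
definition loop_type :: "nat \<Rightarrow> (nat \<Rightarrow> nat) \<Rightarrow> (nat \<Rightarrow> nat) \<Rightarrow> nat multiset" where
  "loop_type k A B = image_mset (\<lambda>L. card L div 2) (mset_set (loops k A B))"

fun walk :: "(nat \<Rightarrow> nat) \<Rightarrow> (nat \<Rightarrow> nat) \<Rightarrow> nat \<Rightarrow> nat \<Rightarrow> nat" where
  "walk S1 S2 j 0 = j"
| "walk S1 S2 j (Suc 0) = j"
| "walk S1 S2 j (Suc (Suc m)) = (if odd (Suc m) then S2 else S1) (walk S1 S2 j (Suc m))"

definition loop_refl :: "(nat \<Rightarrow> nat) \<Rightarrow> (nat \<Rightarrow> nat) \<Rightarrow> nat set \<Rightarrow> nat \<Rightarrow> nat \<Rightarrow> nat" where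
  "loop_refl S1 S2 L j x =
     (if \<exists>m\<in>{1..card L}. walk S1 S2 j m = x
      then walk S1 S2 j (card L + 1 - (THE m. m \<in> {1..card L} \<and> walk S1 S2 j m = x))
      else x)"

text \<open>The group G generated by the r_i, for a choice c of starting label in each loop.\<close>
definition Ggroup :: "nat \<Rightarrow> (nat \<Rightarrow> nat) \<Rightarrow> (nat \<Rightarrow> nat) \<Rightarrow> (nat set \<Rightarrow> nat) \<Rightarrow> (nat \<Rightarrow> nat) set" where
  "Ggroup k S1 S2 c = generate (sym_group (2*k)) ((\<lambda>L. loop_refl S1 S2 L (c L)) ` loops k S1 S2)"

definition G_orbit :: "(nat \<Rightarrow> nat) set \<Rightarrow> (nat \<Rightarrow> nat) \<Rightarrow> (nat \<Rightarrow> nat) set" where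
  "G_orbit G S0 = {pp_act \<sigma> S0 | \<sigma>. \<sigma> \<in> G}"

end

theory Submission
  imports Defs "HOL-Computational_Algebra.Primes"
begin

section \<open>Pair partitions\<close>

lemma pp_out: "pair_partition k S \<Longrightarrow> x \<notin> {1..2*k} \<Longrightarrow> S x = x"
  unfolding pair_partition_def using permutes_not_in by metis

lemma pp_range: "pair_partition k S \<Longrightarrow> x \<in> {1..2*k} \<Longrightarrow> S x \<in> {1..2*k}"
  unfolding pair_partition_def using permutes_in_image by metis

lemma pp_nofix: "pair_partition k S \<Longrightarrow> x \<in> {1..2*k} \<Longrightarrow> S x \<noteq> x"
  unfolding pair_partition_def by auto

lemma pp_invol: "S (S x) = x" if "pair_partition k S"
proof (cases "x \<in> {1..2*k}")
  case True then show ?thesis using that unfolding pair_partition_def by auto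
next
  case False then show ?thesis using that pp_out by metis
qed

lemma pp_inj: "pair_partition k S \<Longrightarrow> S x = S y \<Longrightarrow> x = y"
  by (metis pp_invol)

section \<open>Components\<close>

definition comp :: "nat \<Rightarrow> (nat \<Rightarrow> nat) \<Rightarrow> (nat \<Rightarrow> nat) \<Rightarrow> nat \<Rightarrow> nat set" where
  "comp k A B x = {j \<in> {1..2*k}. (x, j) \<in> (loop_edges A B)\<^sup>*}"

lemma loops_comp: "loops k A B = comp k A B ` {1..2*k}"
  unfolding loops_def comp_def by auto

lemma closed_reach:
  assumes "(x, y) \<in> (loop_edges A B)\<^sup>*" "x \<in> U" "\<forall>z\<in>U. A z \<in> U \<and> B z \<in> U"
  shows "y \<in> U"
  using assms(1,2)
proof (induction rule: rtrancl_induct)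
  case base then show ?case by simp
next
  case (step y z)
  then show ?case using assms(3) unfolding loop_edges_def by auto
qed

lemma edges_sym:
  assumes "pair_partition k A" "pair_partition k B"
  shows "sym (loop_edges A B)"
proof (rule symI)
  fix a b assume "(a, b) \<in> loop_edges A B"
  then have "b = A a \<or> b = B a" unfolding loop_edges_def by auto
  then show "(b, a) \<in> loop_edges A B"
  proof
    assume "b = A a"
    then have "a = A b" using pp_invol[OF assms(1)] by simp
    then show ?thesis unfolding loop_edges_def by auto
  next
    assume "b = B a"
    then have "a = B b" using pp_invol[OF assms(2)] by simp
    then show ?thesis unfolding loop_edges_def by auto
  qed
qed

lemma comp_refl: "x \<in> {1..2*k} \<Longrightarrow> x \<in> comp k A B x"
  unfolding comp_def by auto

lemma comp_same:
  assumes "pair_partition k A" "pair_partition k B" "y \<in> comp k A B x"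
  shows "comp k A B y = comp k A B x"
proof -
  have s: "sym ((loop_edges A B)\<^sup>*)" using sym_rtrancl edges_sym assms(1,2) by blast
  have xy: "(x, y) \<in> (loop_edges A B)\<^sup>*" using assms(3) unfolding comp_def by auto
  then have yx: "(y, x) \<in> (loop_edges A B)\<^sup>*" using s unfolding sym_def by blast
  show ?thesis unfolding comp_def using xy yx
    by (auto intro: rtrancl_trans)
qed

lemma comp_closed:
  assumes "pair_partition k A" "pair_partition k B" "y \<in> comp k A B x"
  shows "A y \<in> comp k A B x" "B y \<in> comp k A B x"
proof -
  have y: "y \<in> {1..2*k}" "(x, y) \<in> (loop_edges A B)\<^sup>*" using assms(3) unfolding comp_def by auto
  have "(y, A y) \<in> loop_edges A B" "(y, B y) \<in> loop_edges A B" unfolding loop_edges_def by auto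
  then show "A y \<in> comp k A B x" "B y \<in> comp k A B x"
    using y pp_range[OF assms(1)] pp_range[OF assms(2)] unfolding comp_def
    by (auto intro: rtrancl_into_rtrancl)
qed

lemma comp_sub: "comp k A B x \<subseteq> {1..2*k}"
  unfolding comp_def by auto

lemma comp_minimal:
  assumes "x \<in> U" "\<forall>z\<in>U. A z \<in> U \<and> B z \<in> U"
  shows "comp k A B x \<subseteq> U"
  unfolding comp_def using closed_reach[OF _ assms(1,2)] by auto


section \<open>Walks\<close>

locale twopp =
  fixes k :: nat and S1 S2 :: "nat \<Rightarrow> nat"
  assumes pp1: "pair_partition k S1" and pp2: "pair_partition k S2"
begin

definition Rs :: "nat \<Rightarrow> nat \<Rightarrow> nat" where
  "Rs m = (if odd m then S2 else S1)"

lemma Rs_invol: "Rs m (Rs m x) = x"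
  unfolding Rs_def using pp_invol[OF pp1] pp_invol[OF pp2] by auto

lemma Rs_range: "x \<in> {1..2*k} \<Longrightarrow> Rs m x \<in> {1..2*k}"
  unfolding Rs_def using pp_range[OF pp1] pp_range[OF pp2] by auto

lemma Rs_nofix: "x \<in> {1..2*k} \<Longrightarrow> Rs m x \<noteq> x"
  unfolding Rs_def using pp_nofix[OF pp1] pp_nofix[OF pp2] by auto

lemma Rs_par: "odd a = odd b \<Longrightarrow> Rs a = Rs b"
  unfolding Rs_def by auto

lemma Rs_cases: "Rs m = S1 \<or> Rs m = S2"
  unfolding Rs_def by auto

lemma Rs_other: "{Rs m x, Rs (Suc m) x} = {S1 x, S2 x}"
  unfolding Rs_def by auto

abbreviation w where "w j \<equiv> walk S1 S2 j"

lemma walk_Suc: "1 \<le> m \<Longrightarrow> w j (Suc m) = Rs m (w j m)"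
  by (cases m) (auto simp: Rs_def)

lemma walk_back: "1 \<le> m \<Longrightarrow> w j m = Rs m (w j (Suc m))"
  using walk_Suc Rs_invol by metis

lemma walk_range: "j \<in> {1..2*k} \<Longrightarrow> w j m \<in> {1..2*k}"
proof (induction m)
  case 0 then show ?case by simp
next
  case (Suc m)
  show ?case
  proof (cases "m = 0")
    case True then show ?thesis using Suc by simp
  next
    case False then show ?thesis using Suc walk_Suc[of m j] Rs_range by simp
  qed
qed

lemma walk_fwd:
  assumes "1 \<le> a" "1 \<le> b" "odd a = odd b" "w j a = w j b"
  shows "w j (a + t) = w j (b + t)"
proof (induction t)
  case 0 then show ?case using assms by simp
next
  case (Suc t)
  have "Rs (a + t) = Rs (b + t)" using assms(3) by (intro Rs_par) auto
  then show ?case using Suc walk_Suc[of "a+t" j] walk_Suc[of "b+t" j] assms(1,2) by simp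
qed

lemma walk_bwd:
  assumes "1 \<le> a" "1 \<le> b" "odd a = odd b" "w j a = w j b"
  shows "t < a \<Longrightarrow> t < b \<Longrightarrow> w j (a - t) = w j (b - t)"
proof (induction t)
  case 0 then show ?case using assms by simp
next
  case (Suc t)
  have e1: "Suc (a - Suc t) = a - t" "Suc (b - Suc t) = b - t" using Suc.prems by auto
  have "Rs (a - Suc t) = Rs (b - Suc t)" using assms(3) Suc.prems by (intro Rs_par) auto
  then show ?case using Suc walk_back[of "a - Suc t" j] walk_back[of "b - Suc t" j] e1 by simp
qed

lemma walk_par_aux:
  assumes "j \<in> {1..2*k}"
  shows "b - a = d \<Longrightarrow> 1 \<le> a \<Longrightarrow> a < b \<Longrightarrow> w j a = w j b \<Longrightarrow> odd a = odd b"
proof (induction d arbitrary: a b rule: less_induct)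
  case (less d)
  show ?case
  proof (rule ccontr)
    assume np: "odd a \<noteq> odd b"
    show False
    proof (cases "b = Suc a")
      case True
      have "w j (Suc a) = Rs a (w j a)" using walk_Suc less.prems(2) by blast
      moreover have "Rs a (w j a) \<noteq> w j a" using Rs_nofix[OF walk_range[OF assms]] .
      ultimately show False using less.prems(4) True by metis
    next
      case False
      have "b \<noteq> Suc (Suc a)" using np by auto
      then have ab: "Suc a < b - 1" using False less.prems(3) by linarith
      have "w j (Suc a) = Rs a (w j a)" using walk_Suc less.prems(2) by blast
      moreover have "w j (b - 1) = Rs (b - 1) (w j b)" using walk_back[of "b-1" j] ab by simp
      moreover have "Rs a = Rs (b - 1)" using np ab by (intro Rs_par) auto
      ultimately have eq: "w j (Suc a) = w j (b - 1)" using less.prems(4) by metis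
      have lt: "b - 1 - Suc a < d" using less.prems(1) ab by linarith
      have "odd (Suc a) = odd (b - 1)"
        by (rule less.IH[OF lt refl _ ab eq]) simp
      then show False using np ab by auto
    qed
  qed
qed

lemma walk_par:
  "j \<in> {1..2*k} \<Longrightarrow> 1 \<le> a \<Longrightarrow> a < b \<Longrightarrow> w j a = w j b \<Longrightarrow> odd a = odd b"
  by (rule walk_par_aux[OF _ refl])

lemma walk_period_exists:
  assumes j: "j \<in> {1..2*k}"
  shows "\<exists>p>0. w j (Suc p) = w j 1"
proof -
  have "\<not> inj_on (w j) {1..Suc (2*k)}"
  proof
    assume inj: "inj_on (w j) {1..Suc (2*k)}"
    have "w j ` {1..Suc (2*k)} \<subseteq> {1..2*k}" using walk_range[OF j] by auto
    then have "card (w j ` {1..Suc (2*k)}) \<le> card {1..2*k}" by (intro card_mono) auto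
    then show False using card_image[OF inj] by simp
  qed
  then obtain a b where ab: "a \<in> {1..Suc (2*k)}" "b \<in> {1..Suc (2*k)}" "a \<noteq> b" "w j a = w j b"
    unfolding inj_on_def by blast
  have "\<exists>a b. 1 \<le> a \<and> a < b \<and> w j a = w j b"
  proof (cases "a < b")
    case True then show ?thesis using ab by auto
  next
    case False then show ?thesis using ab by (intro exI[of _ b] exI[of _ a]) auto
  qed
  then obtain a b where ab2: "1 \<le> a" "a < b" "w j a = w j b" by blast
  have par: "odd a = odd b" using walk_par[OF j ab2] .
  have "w j (a - (a - 1)) = w j (b - (a - 1))" using walk_bwd[OF ab2(1) _ par ab2(3), of "a - 1"] ab2 by simp
  then have "w j 1 = w j (Suc (b - a))" using ab2 by (simp add: Suc_diff_le)
  then show ?thesis using ab2 by (intro exI[of _ "b - a"]) auto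
qed

definition P :: "nat \<Rightarrow> nat" where
  "P j = (LEAST p. 0 < p \<and> w j (Suc p) = w j 1)"

lemma P_prop:
  assumes j: "j \<in> {1..2*k}"
  shows "0 < P j" "w j (Suc (P j)) = w j 1" "\<And>p. 0 < p \<Longrightarrow> p < P j \<Longrightarrow> w j (Suc p) \<noteq> w j 1"
proof -
  from walk_period_exists[OF j] obtain p where "0 < p \<and> w j (Suc p) = w j 1" by blast
  then have "0 < P j \<and> w j (Suc (P j)) = w j 1" unfolding P_def by (rule LeastI)
  then show "0 < P j" "w j (Suc (P j)) = w j 1" by auto
  show "\<And>p. 0 < p \<Longrightarrow> p < P j \<Longrightarrow> w j (Suc p) \<noteq> w j 1"
    unfolding P_def using not_less_Least by blast
qed

lemma P_even: "j \<in> {1..2*k} \<Longrightarrow> even (P j)"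
  using walk_par[of j 1 "Suc (P j)"] P_prop[of j] by auto

lemma walk_inj: assumes j: "j \<in> {1..2*k}" shows "inj_on (w j) {1..P j}"
proof (rule inj_onI)
  fix a b assume a: "a \<in> {1..P j}" and b: "b \<in> {1..P j}" and e: "w j a = w j b"
  show "a = b"
  proof (rule ccontr)
    assume "a \<noteq> b"
    define a' where "a' = min a b"
    define b' where "b' = max a b"
    have ab: "a' \<in> {1..P j}" "b' \<in> {1..P j}" "a' < b'" "w j a' = w j b'"
      using a b e \<open>a \<noteq> b\<close> unfolding a'_def b'_def by (auto simp: min_def max_def)
    have par: "odd a' = odd b'" using walk_par[OF j _ ab(3,4)] ab(1) by simp
    have "w j (a' - (a' - 1)) = w j (b' - (a' - 1))"
      using walk_bwd[OF _ _ par ab(4), of "a' - 1"] ab by auto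
    then have e1: "w j 1 = w j (Suc (b' - a'))" using ab by (simp add: Suc_diff_le)
    have "0 < b' - a'" "b' - a' < P j" using ab by auto
    then show False using P_prop(3)[OF j, of "b' - a'"] e1 by metis
  qed
qed

lemma walk_periodic: assumes j: "j \<in> {1..2*k}" and m: "1 \<le> m" shows "w j (m + P j) = w j m"
proof -
  have "w j (1 + (m - 1)) = w j (Suc (P j) + (m - 1))"
    using walk_fwd[of 1 "Suc (P j)" j "m - 1"] P_prop[OF j] P_even[OF j] by auto
  then show ?thesis using m by (simp add: add.commute)
qed

lemma walk_image: assumes j: "j \<in> {1..2*k}" shows "w j ` {1..P j} = comp k S1 S2 j"
proof
  have "w j m \<in> comp k S1 S2 j" for m
  proof (induction m)
    case 0 then show ?case using comp_refl j by simp
  next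
    case (Suc m)
    show ?case
    proof (cases "m = 0")
      case True then show ?thesis using comp_refl j by simp
    next
      case False
      then have "w j (Suc m) = Rs m (w j m)" using walk_Suc by simp
      then show ?thesis using Rs_cases[of m] comp_closed[OF pp1 pp2 Suc.IH] by metis
    qed
  qed
  then show "w j ` {1..P j} \<subseteq> comp k S1 S2 j" by auto
next
  let ?W = "w j ` {1..P j}"
  have P0: "0 < P j" using P_prop[OF j] by simp
  have cl: "S1 x \<in> ?W \<and> S2 x \<in> ?W" if x: "x \<in> ?W" for x
  proof -
    obtain m where m: "m \<in> {1..P j}" "x = w j m" using x by blast
    have A: "Rs m x \<in> ?W"
    proof (cases "m = P j")
      case True
      then have e: "Rs m x = w j 1" using walk_Suc[of m j] m P_prop[OF j] by simp
      have "(1::nat) \<in> {1..P j}" using P0 by simp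
      then have "w j 1 \<in> ?W" by (rule imageI)
      then show ?thesis by (subst e)
    next
      case False
      then have "Rs m x = w j (Suc m)" using walk_Suc[of m j] m by simp
      then show ?thesis using m False by auto
    qed
    have B: "Rs (Suc m) x \<in> ?W"
    proof (cases "m = 1")
      case True
      have "w j (P j) = Rs (P j) (w j (Suc (P j)))" using walk_back[of "P j" j] P0 by simp
      also have "\<dots> = Rs (Suc m) x" using P_prop(2)[OF j] m True P_even[OF j]
        by (simp add: Rs_def)
      finally have e: "w j (P j) = Rs (Suc m) x" .
      have "P j \<in> {1..P j}" using P0 by simp
      then have "w j (P j) \<in> ?W" by (rule imageI)
      then show ?thesis by (subst (asm) e)
    next
      case False
      have sm: "Suc (m - 1) = m" using m by auto
      have "w j (m - 1) = Rs (m - 1) (w j m)" using walk_back[of "m - 1" j] m False sm by simp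
      moreover have "Rs (m - 1) = Rs (Suc m)" using m False by (intro Rs_par) auto
      ultimately have e: "w j (m - 1) = Rs (Suc m) x" using m by simp
      have "m - 1 \<in> {1..P j}" using m False by auto
      then have "w j (m - 1) \<in> ?W" by (rule imageI)
      then show ?thesis by (subst (asm) e)
    qed
    show ?thesis
    proof (cases "odd m")
      case True
      then have "Rs m = S2" "Rs (Suc m) = S1" unfolding Rs_def by auto
      then show ?thesis using A B by simp
    next
      case False
      then have "Rs m = S1" "Rs (Suc m) = S2" unfolding Rs_def by auto
      then show ?thesis using A B by simp
    qed
  qed
  have "(1::nat) \<in> {1..P j}" using P0 by simp
  then have "w j 1 \<in> ?W" by (rule imageI)
  then have "j \<in> ?W" by simp
  then show "comp k S1 S2 j \<subseteq> ?W"
    by (rule comp_minimal) (use cl in blast)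
qed

lemma card_comp: "j \<in> {1..2*k} \<Longrightarrow> card (comp k S1 S2 j) = P j"
proof -
  assume j: "j \<in> {1..2*k}"
  have "card (comp k S1 S2 j) = card (w j ` {1..P j})" using walk_image[OF j] by simp
  also have "\<dots> = card {1..P j}" by (rule card_image[OF walk_inj[OF j]])
  finally show ?thesis by simp
qed

definition r :: "nat \<Rightarrow> nat \<Rightarrow> nat" where
  "r j = loop_refl S1 S2 (comp k S1 S2 j) j"

lemma r_walk:
  assumes j: "j \<in> {1..2*k}" and m: "m \<in> {1..P j}"
  shows "r j (w j m) = w j (P j + 1 - m)"
proof -
  have c: "card (comp k S1 S2 j) = P j" using card_comp[OF j] .
  have mc: "m \<in> {1..card (comp k S1 S2 j)}" using m c by simp
  have ex: "\<exists>m'\<in>{1..card (comp k S1 S2 j)}. w j m' = w j m" using mc by blast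
  have th: "(THE m'. m' \<in> {1..card (comp k S1 S2 j)} \<and> w j m' = w j m) = m"
  proof (rule the_equality)
    show "m \<in> {1..card (comp k S1 S2 j)} \<and> w j m = w j m" using mc by simp
  next
    fix m' assume a: "m' \<in> {1..card (comp k S1 S2 j)} \<and> w j m' = w j m"
    then have "m' \<in> {1..P j}" using c by simp
    then show "m' = m" using inj_onD[OF walk_inj[OF j] _ _ m] a by blast
  qed
  have "r j (w j m) = w j (card (comp k S1 S2 j) + 1 -
          (THE m'. m' \<in> {1..card (comp k S1 S2 j)} \<and> w j m' = w j m))"
    unfolding r_def loop_refl_def using ex by (rule if_P)
  then show ?thesis using th c by simp
qed

lemma r_out:
  assumes j: "j \<in> {1..2*k}" and x: "x \<notin> comp k S1 S2 j"
  shows "r j x = x"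
proof -
  have "\<not> (\<exists>m\<in>{1..card (comp k S1 S2 j)}. w j m = x)"
    using x walk_image[OF j] card_comp[OF j] by auto
  then show ?thesis unfolding r_def loop_refl_def by simp
qed

lemma r_props:
  assumes j: "j \<in> {1..2*k}" and x: "x \<in> comp k S1 S2 j"
  shows "r j x \<in> comp k S1 S2 j" "r j (r j x) = x" "r j x \<noteq> x"
proof -
  obtain m where m: "m \<in> {1..P j}" "x = w j m" using x walk_image[OF j] by blast
  have m': "P j + 1 - m \<in> {1..P j}" using m by auto
  have e1: "r j x = w j (P j + 1 - m)" using r_walk[OF j m(1)] m(2) by simp
  show "r j x \<in> comp k S1 S2 j" using e1 m' walk_image[OF j] by blast
  have "P j + 1 - (P j + 1 - m) = m" using m by auto
  then show "r j (r j x) = x" using e1 r_walk[OF j m'] m(2) by simp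
  show "r j x \<noteq> x"
  proof
    assume "r j x = x"
    then have "w j (P j + 1 - m) = w j m" using e1 m(2) by simp
    then have f1: "P j + 1 - m = m" using walk_inj[OF j] m m' unfolding inj_on_def by blast
    have f2: "m \<le> P j" using m by simp
    obtain q where f3: "P j = 2 * q" using P_even[OF j] by (rule evenE)
    have ar: "\<And>a b q::nat. a + 1 - b = b \<Longrightarrow> b \<le> a \<Longrightarrow> a = 2 * q \<Longrightarrow> False" by presburger
    show False by (rule ar[OF f1 f2 f3])
  qed
qed

end


section \<open>The group\<close>

locale mainloc = twopp +
  fixes c :: "nat set \<Rightarrow> nat"
  assumes cL: "\<forall>L \<in> loops k S1 S2. c L \<in> L"
begin

abbreviation "cp \<equiv> comp k S1 S2"
abbreviation "Lam \<equiv> loops k S1 S2"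

definition rho :: "nat set \<Rightarrow> nat \<Rightarrow> nat" where
  "rho L = loop_refl S1 S2 L (c L)"

lemma Lam_cp: "L \<in> Lam \<Longrightarrow> c L \<in> {1..2*k} \<and> cp (c L) = L"
proof -
  assume L: "L \<in> Lam"
  then obtain x where x: "x \<in> {1..2*k}" "L = cp x" unfolding loops_comp by blast
  have cl: "c L \<in> L" using cL L by blast
  then have "cp (c L) = cp x" using comp_same[OF pp1 pp2] x(2) by blast
  moreover have "c L \<in> {1..2*k}" using cl x(2) comp_sub by blast
  ultimately show ?thesis using x(2) by simp
qed

lemma rho_r: "L \<in> Lam \<Longrightarrow> rho L = r (c L)"
  unfolding rho_def r_def using Lam_cp by metis

lemma rho_out: "L \<in> Lam \<Longrightarrow> x \<notin> L \<Longrightarrow> rho L x = x"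
  using rho_r r_out Lam_cp by metis

lemma rho_props:
  assumes "L \<in> Lam" "x \<in> L"
  shows "rho L x \<in> L" "rho L (rho L x) = x" "rho L x \<noteq> x"
proof -
  have a: "c L \<in> {1..2*k}" "cp (c L) = L" using Lam_cp[OF assms(1)] by auto
  have x: "x \<in> cp (c L)" using a assms(2) by simp
  show "rho L x \<in> L" using r_props(1)[OF a(1) x] a(2) rho_r[OF assms(1)] by simp
  show "rho L (rho L x) = x" using r_props(2)[OF a(1) x] rho_r[OF assms(1)] by simp
  show "rho L x \<noteq> x" using r_props(3)[OF a(1) x] rho_r[OF assms(1)] by simp
qed

lemma Lam_sub: "L \<in> Lam \<Longrightarrow> L \<subseteq> {1..2*k}"
  unfolding loops_comp using comp_sub by blast

lemma Lam_ne: "L \<in> Lam \<Longrightarrow> c L \<in> L"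
  using cL by blast

lemma cp_Lam: "x \<in> {1..2*k} \<Longrightarrow> cp x \<in> Lam"
  unfolding loops_comp by blast

lemma cp_of_mem: "L \<in> Lam \<Longrightarrow> x \<in> L \<Longrightarrow> cp x = L"
proof -
  assume L: "L \<in> Lam" and x: "x \<in> L"
  then obtain y where y: "L = cp y" unfolding loops_comp by blast
  then show "cp x = L" using comp_same[OF pp1 pp2] x by blast
qed

lemma finite_Lam: "finite Lam"
  unfolding loops_comp by simp

definition hh :: "nat set set \<Rightarrow> nat \<Rightarrow> nat" where
  "hh I x = (if x \<in> {1..2*k} \<and> cp x \<in> I then rho (cp x) x else x)"

lemma hh_out: "x \<notin> {1..2*k} \<Longrightarrow> hh I x = x"
  unfolding hh_def by (intro if_not_P) blast

lemma hh_comp: "hh I (hh J x) = hh ((I - J) \<union> (J - I)) x"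
proof (cases "x \<in> {1..2*k}")
  case False
  show ?thesis using hh_out[OF False] by simp
next
  case True
  define L where "L = cp x"
  have L: "L \<in> Lam" "x \<in> L" using True cp_Lam comp_refl unfolding L_def by auto
  show ?thesis
  proof (cases "L \<in> J")
    case inJ: True
    have y: "rho L x \<in> L" "rho L (rho L x) = x" using rho_props[OF L] by auto
    have y2: "rho L x \<in> {1..2*k}" "cp (rho L x) = L" using y(1) Lam_sub[OF L(1)] cp_of_mem[OF L(1)] by auto
    have hj: "hh J x = rho L x" unfolding hh_def using True inJ L_def by simp
    show ?thesis
    proof (cases "L \<in> I")
      case True
      then show ?thesis using hj y y2 inJ \<open>x \<in> {1..2*k}\<close> unfolding hh_def by (simp add: L_def[symmetric])
    next
      case False
      then show ?thesis using hj y y2 inJ \<open>x \<in> {1..2*k}\<close> unfolding hh_def by (simp add: L_def[symmetric])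
    qed
  next
    case notJ: False
    have hj: "hh J x = x" unfolding hh_def using notJ L_def by simp
    show ?thesis using hj notJ True unfolding hh_def by (simp add: L_def[symmetric])
  qed
qed

lemma hh_empty: "hh {} = id"
  unfolding hh_def by auto

lemma hh_invol: "hh I (hh I x) = x"
  using hh_comp[of I I x] hh_empty by simp

lemma hh_o: "hh I \<circ> hh J = hh ((I - J) \<union> (J - I))"
  using hh_comp by (simp add: fun_eq_iff)

lemma hh_range: "x \<in> {1..2*k} \<Longrightarrow> hh I x \<in> {1..2*k}"
proof -
  assume x: "x \<in> {1..2*k}"
  have L: "cp x \<in> Lam" "x \<in> cp x" using x cp_Lam comp_refl by auto
  show ?thesis unfolding hh_def using rho_props(1)[OF L] Lam_sub[OF L(1)] x by auto
qed

lemma hh_permutes: "hh I permutes {1..2*k}"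
proof (rule bij_imp_permutes)
  show "bij_betw (hh I) {1..2*k} {1..2*k}"
  proof -
    have "hh I ` {1..2*k} \<subseteq> {1..2*k}" using hh_range by blast
    then show ?thesis by (intro bij_betw_byWitness[where f' = "hh I"]) (simp_all add: hh_invol)
  qed
  show "\<And>x. x \<notin> {1..2*k} \<Longrightarrow> hh I x = x" by (rule hh_out)
qed

lemma hh_single: "L \<in> Lam \<Longrightarrow> hh {L} = rho L"
proof
  fix x assume L: "L \<in> Lam"
  show "hh {L} x = rho L x"
  proof (cases "x \<in> L")
    case True
    then have "x \<in> {1..2*k}" "cp x = L" using Lam_sub[OF L] cp_of_mem[OF L] by auto
    then show ?thesis unfolding hh_def by simp
  next
    case False
    have "\<not> (x \<in> {1..2*k} \<and> cp x = L)" using False comp_refl by blast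
    then show ?thesis unfolding hh_def using rho_out[OF L False] by auto
  qed
qed

lemma hh_moves: "x \<in> {1..2*k} \<Longrightarrow> hh I x \<noteq> x \<longleftrightarrow> cp x \<in> I"
proof -
  assume x: "x \<in> {1..2*k}"
  have L: "cp x \<in> Lam" "x \<in> cp x" using x cp_Lam comp_refl by auto
  show ?thesis unfolding hh_def using rho_props(3)[OF L] x by auto
qed

lemma inv_hh: "Hilbert_Choice.inv (hh I) = hh I"
  by (rule inv_unique_comp) (simp_all add: fun_eq_iff hh_invol)

lemma G_eq: "Ggroup k S1 S2 c = hh ` Pow Lam"
proof
  show "Ggroup k S1 S2 c \<subseteq> hh ` Pow Lam"
  proof
    fix g assume "g \<in> Ggroup k S1 S2 c"
    then show "g \<in> hh ` Pow Lam"
      unfolding Ggroup_def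
    proof (induction rule: generate.induct)
      case one
      have "id \<in> hh ` Pow Lam" using hh_empty by (metis Pow_bottom imageI)
      then show ?case by (simp only: sym_group_one)
    next
      case (incl h)
      then obtain L where L: "L \<in> Lam" "h = loop_refl S1 S2 L (c L)" by blast
      then have "h = hh {L}" using hh_single rho_def by simp
      then show ?case using L by blast
    next
      case (inv h)
      then obtain L where L: "L \<in> Lam" "h = loop_refl S1 S2 L (c L)" by blast
      then have hL: "h = hh {L}" using hh_single rho_def by simp
      have "h \<in> carrier (sym_group (2*k))" using hL hh_permutes by (simp add: sym_group_carrier)
      then have "inv\<^bsub>sym_group (2*k)\<^esub> h = Hilbert_Choice.inv h" by simp
      also have "\<dots> = h" using hL inv_hh by simp
      finally show ?case using hL L by auto
    next
      case (eng h1 h2)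
      then obtain I J where IJ: "I \<in> Pow Lam" "J \<in> Pow Lam" "h1 = hh I" "h2 = hh J" by blast
      have "h1 \<otimes>\<^bsub>sym_group (2*k)\<^esub> h2 = hh ((I - J) \<union> (J - I))"
        using IJ hh_o by (simp add: sym_group_mult)
      moreover have "(I - J) \<union> (J - I) \<in> Pow Lam" using IJ by auto
      ultimately show ?case by blast
    qed
  qed
next
  show "hh ` Pow Lam \<subseteq> Ggroup k S1 S2 c"
  proof
    fix g assume "g \<in> hh ` Pow Lam"
    then obtain I where I: "I \<subseteq> Lam" "g = hh I" by blast
    have "finite I" using I(1) finite_Lam finite_subset by blast
    then have "hh I \<in> Ggroup k S1 S2 c" using I(1)
    proof (induction I rule: finite_induct)
      case empty
      have "\<one>\<^bsub>sym_group (2*k)\<^esub> \<in> Ggroup k S1 S2 c" unfolding Ggroup_def by (rule generate.one)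
      then show ?case by (simp only: sym_group_one hh_empty)
    next
      case (insert L I)
      have L: "L \<in> Lam" using insert by simp
      have "rho L \<in> Ggroup k S1 S2 c"
        unfolding Ggroup_def rho_def using L by (intro generate.incl) blast
      moreover have "hh I \<in> Ggroup k S1 S2 c" using insert by simp
      ultimately have "rho L \<otimes>\<^bsub>sym_group (2*k)\<^esub> hh I \<in> Ggroup k S1 S2 c"
        unfolding Ggroup_def by (rule generate.eng)
      moreover have "rho L \<otimes>\<^bsub>sym_group (2*k)\<^esub> hh I = hh (insert L I)"
      proof -
        have "rho L \<otimes>\<^bsub>sym_group (2*k)\<^esub> hh I = hh {L} \<circ> hh I"
          using hh_single[OF L] by (simp add: sym_group_mult)
        also have "\<dots> = hh (({L} - I) \<union> (I - {L}))" by (rule hh_o)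
        also have "({L} - I) \<union> (I - {L}) = insert L I" using insert.hyps(2) by auto
        finally show ?thesis .
      qed
      ultimately show ?case by simp
    qed
    then show "g \<in> Ggroup k S1 S2 c" using I by simp
  qed
qed

end


section \<open>Counting\<close>

lemma sd_sd: "(I - ((I - J) \<union> (J - I))) \<union> (((I - J) \<union> (J - I)) - I) = J"
  by blast

lemma count_fibers:
  fixes F :: "'a set \<Rightarrow> 'b" and Q :: "'a set \<Rightarrow> bool"
  assumes fin: "finite A"
    and fib: "\<And>I J. I \<subseteq> A \<Longrightarrow> J \<subseteq> A \<Longrightarrow> F J = F I \<longleftrightarrow> Q ((I - J) \<union> (J - I))"
  shows "card (F ` Pow A) * card {D \<in> Pow A. Q D} = 2 ^ card A"
proof -
  let ?K = "{D \<in> Pow A. Q D}"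
  have fibcard: "card {J \<in> Pow A. F J = y} = card ?K" if y: "y \<in> F ` Pow A" for y
  proof -
    obtain I where I: "I \<subseteq> A" "y = F I" using y by blast
    let ?f = "\<lambda>J. (I - J) \<union> (J - I)"
    have "bij_betw ?f {J \<in> Pow A. F J = y} ?K"
    proof (rule bij_betw_byWitness[where f' = ?f])
      show "\<forall>J\<in>{J \<in> Pow A. F J = y}. ?f (?f J) = J" using sd_sd by blast
      show "\<forall>J\<in>?K. ?f (?f J) = J" using sd_sd by blast
      show "?f ` {J \<in> Pow A. F J = y} \<subseteq> ?K"
      proof
        fix D assume "D \<in> ?f ` {J \<in> Pow A. F J = y}"
        then obtain J where J: "J \<subseteq> A" "F J = F I" "D = ?f J" using I by blast
        then show "D \<in> ?K" using fib[OF I(1) J(1)] I(1) by blast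
      qed
      show "?f ` ?K \<subseteq> {J \<in> Pow A. F J = y}"
      proof
        fix J assume "J \<in> ?f ` ?K"
        then obtain D where D: "D \<subseteq> A" "Q D" "J = ?f D" by blast
        have JA: "J \<subseteq> A" using D I(1) by blast
        have "?f J = D" using D(3) sd_sd by blast
        then have "F J = F I" using fib[OF I(1) JA] D(2) by simp
        then show "J \<in> {J \<in> Pow A. F J = y}" using JA I(2) by simp
      qed
    qed
    then show ?thesis by (rule bij_betw_same_card)
  qed
  have "2 ^ card A = card (Pow A)" using fin by (simp add: card_Pow)
  also have "\<dots> = (\<Sum>J\<in>Pow A. 1)" by simp
  also have "\<dots> = (\<Sum>y\<in>F ` Pow A. (\<Sum>J\<in>{J. J \<in> Pow A \<and> F J = y}. 1))"
    using fin by (intro sum.image_gen) simp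
  also have "\<dots> = (\<Sum>y\<in>F ` Pow A. card ?K)"
    using fibcard by (intro sum.cong) simp_all
  also have "\<dots> = card (F ` Pow A) * card ?K" by simp
  finally show ?thesis by simp
qed

context mainloc
begin

definition FF :: "(nat \<Rightarrow> nat) \<Rightarrow> nat set set \<Rightarrow> nat \<Rightarrow> nat" where
  "FF S0 I = hh I \<circ> S0 \<circ> hh I"

lemma orbit_eq: "G_orbit (Ggroup k S1 S2 c) S0 = FF S0 ` Pow Lam"
proof -
  have e: "pp_act (hh I) S0 = FF S0 I" for I unfolding pp_act_def FF_def inv_hh ..
  show ?thesis unfolding G_orbit_def G_eq
  proof
    show "{pp_act \<sigma> S0 |\<sigma>. \<sigma> \<in> hh ` Pow Lam} \<subseteq> FF S0 ` Pow Lam" using e by auto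
    show "FF S0 ` Pow Lam \<subseteq> {pp_act \<sigma> S0 |\<sigma>. \<sigma> \<in> hh ` Pow Lam}"
    proof
      fix y assume "y \<in> FF S0 ` Pow Lam"
      then obtain I where "I \<in> Pow Lam" "y = FF S0 I" by blast
      then have "y = pp_act (hh I) S0 \<and> hh I \<in> hh ` Pow Lam" using e by simp
      then show "y \<in> {pp_act \<sigma> S0 |\<sigma>. \<sigma> \<in> hh ` Pow Lam}" by blast
    qed
  qed
qed

lemma conj_iff: "hh I \<circ> X \<circ> hh I = Y \<longleftrightarrow> X = hh I \<circ> Y \<circ> hh I"
proof
  assume "hh I \<circ> X \<circ> hh I = Y"
  then have "hh I \<circ> (hh I \<circ> X \<circ> hh I) \<circ> hh I = hh I \<circ> Y \<circ> hh I" by simp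
  then show "X = hh I \<circ> Y \<circ> hh I" by (simp add: fun_eq_iff hh_invol)
next
  assume "X = hh I \<circ> Y \<circ> hh I"
  then have "hh I \<circ> X \<circ> hh I = hh I \<circ> (hh I \<circ> Y \<circ> hh I) \<circ> hh I" by simp
  then show "hh I \<circ> X \<circ> hh I = Y" by (simp add: fun_eq_iff hh_invol)
qed

lemma fiber: "FF S0 J = FF S0 I \<longleftrightarrow> FF S0 ((I - J) \<union> (J - I)) = S0"
proof -
  have e1: "hh ((I - J) \<union> (J - I)) = hh I \<circ> hh J" using hh_o[of I J] by simp
  have e2: "hh ((I - J) \<union> (J - I)) = hh J \<circ> hh I" using hh_o[of J I] by (simp add: Un_commute)
  have "FF S0 ((I - J) \<union> (J - I)) = hh I \<circ> FF S0 J \<circ> hh I"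
    unfolding FF_def
    by (subst e1, subst e2) (simp add: comp_assoc)
  then have "FF S0 ((I - J) \<union> (J - I)) = S0 \<longleftrightarrow> FF S0 J = hh I \<circ> S0 \<circ> hh I"
    using conj_iff by simp
  then show ?thesis unfolding FF_def by metis
qed

lemma K_closed:
  assumes S0: "pair_partition k S0" and D: "D \<subseteq> Lam" "FF S0 D = S0" and x: "x \<in> \<Union>D"
  shows "S0 x \<in> \<Union>D \<and> S1 x \<in> \<Union>D"
proof
  obtain L where L: "L \<in> D" "x \<in> L" using x by blast
  have LL: "L \<in> Lam" using L D by blast
  then obtain y where y: "L = cp y" unfolding loops_comp by blast
  show "S1 x \<in> \<Union>D" using comp_closed(1)[OF pp1 pp2, of x y] L y by blast
  have xr: "x \<in> {1..2*k}" using Lam_sub[OF LL] L by blast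
  have "cp x = L" using cp_of_mem[OF LL L(2)] .
  then have mv: "hh D x \<noteq> x" using hh_moves[OF xr] L by simp
  show "S0 x \<in> \<Union>D"
  proof (rule ccontr)
    assume n: "S0 x \<notin> \<Union>D"
    have yr: "S0 x \<in> {1..2*k}" using pp_range[OF S0 xr] .
    have "cp (S0 x) \<notin> D" using n comp_refl[OF yr] by blast
    then have fx: "hh D (S0 x) = S0 x" using hh_moves[OF yr] by blast
    have "hh D (S0 (hh D (hh D x))) = S0 (hh D x)"
      using D(2) unfolding FF_def by (metis comp_apply)
    then have "hh D (S0 x) = S0 (hh D x)" by (simp add: hh_invol)
    then have "S0 x = S0 (hh D x)" using fx by simp
    then have "x = hh D x" using pp_inj[OF S0] by blast
    then show False using mv by simp
  qed
qed

lemma K_card: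
  assumes S0: "pair_partition k S0"
  shows "card {D \<in> Pow Lam. FF S0 D = S0} \<le> 2 ^ nloops k S0 S1"
proof -
  let ?K = "{D \<in> Pow Lam. FF S0 D = S0}"
  let ?M = "loops k S0 S1"
  define g where "g D = {M \<in> ?M. M \<subseteq> \<Union>D}" for D
  have rec: "\<Union>(g D) = \<Union>D" if D: "D \<in> ?K" for D
  proof
    show "\<Union>(g D) \<subseteq> \<Union>D" unfolding g_def by blast
    show "\<Union>D \<subseteq> \<Union>(g D)"
    proof
      fix x assume x: "x \<in> \<Union>D"
      have xr: "x \<in> {1..2*k}" using x D Lam_sub by blast
      have cl: "\<forall>z\<in>\<Union>D. S0 z \<in> \<Union>D \<and> S1 z \<in> \<Union>D" using K_closed[OF S0] D by blast
      have "comp k S0 S1 x \<subseteq> \<Union>D" using comp_minimal[OF x cl] .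
      moreover have "comp k S0 S1 x \<in> ?M" using xr unfolding loops_comp by blast
      moreover have "x \<in> comp k S0 S1 x" using comp_refl[OF xr] .
      ultimately show "x \<in> \<Union>(g D)" unfolding g_def by blast
    qed
  qed
  have uinj: "D = D'" if "D \<subseteq> Lam" "D' \<subseteq> Lam" "\<Union>D = \<Union>D'" for D D'
  proof -
    have sub: "D \<subseteq> D'" if "D \<subseteq> Lam" "D' \<subseteq> Lam" "\<Union>D = \<Union>D'" for D D'
    proof
      fix L assume L: "L \<in> D"
      then have LL: "L \<in> Lam" using that by blast
      have "c L \<in> \<Union>D'" using Lam_ne[OF LL] L that(3) by blast
      then obtain L' where L': "L' \<in> D'" "c L \<in> L'" by blast
      have "cp (c L) = L'" using cp_of_mem[of L' "c L"] L' that(2) by blast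
      moreover have "cp (c L) = L" using cp_of_mem[OF LL Lam_ne[OF LL]] .
      ultimately show "L \<in> D'" using L' by simp
    qed
    show ?thesis using sub[of D D'] sub[of D' D] that by blast
  qed
  have "inj_on g ?K"
  proof (rule inj_onI)
    fix D D' assume "D \<in> ?K" "D' \<in> ?K" "g D = g D'"
    then show "D = D'" using rec uinj by (metis (no_types, lifting) PowD mem_Collect_eq)
  qed
  moreover have "g ` ?K \<subseteq> Pow ?M" unfolding g_def by blast
  moreover have "finite (Pow ?M)" unfolding loops_comp by simp
  ultimately have "card ?K \<le> card (Pow ?M)" by (intro card_inj_on_le)
  also have "\<dots> = 2 ^ nloops k S0 S1" unfolding nloops_def
    by (rule card_Pow[of ?M, unfolded loops_comp, folded loops_comp]) (simp add: loops_comp)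
  finally show ?thesis .
qed

lemma main_count:
  assumes S0: "pair_partition k S0"
  shows "\<exists>s \<le> nloops k S0 S1. card (G_orbit (Ggroup k S1 S2 c) S0) * 2 ^ s = 2 ^ card Lam"
proof -
  let ?K = "{D \<in> Pow Lam. FF S0 D = S0}"
  have cnt: "card (FF S0 ` Pow Lam) * card ?K = 2 ^ card Lam"
    by (rule count_fibers[OF finite_Lam]) (rule fiber)
  then have "card ?K dvd 2 ^ card Lam" by (metis dvd_triv_right)
  then obtain s where s: "s \<le> card Lam" "card ?K = 2 ^ s"
    using divides_primepow_nat[of 2] by auto
  have "(2::nat) ^ s \<le> 2 ^ nloops k S0 S1" using K_card[OF S0] s(2) by simp
  then have "s \<le> nloops k S0 S1" by simp
  then show ?thesis using cnt s(2) orbit_eq by auto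
qed

end

theorem lemma3p11:
  fixes k :: nat and \<mu> :: "nat multiset" and S0 S1 S2 :: "nat \<Rightarrow> nat" and c :: "nat set \<Rightarrow> nat"
  assumes "sum_mset \<mu> = k" and "0 \<notin># \<mu>"
    and "pair_partition k S1" and "pair_partition k S2"
    and "loop_type k S1 S2 = \<mu>"
    and "\<forall>L \<in> loops k S1 S2. c L \<in> L"
    and "pair_partition k S0"
  shows "(2::rat) ^ nloops k S0 S1 / 2 ^ size \<mu> * of_nat (card (G_orbit (Ggroup k S1 S2 c) S0)) \<in> \<int>"
proof -
  interpret mainloc k S1 S2 c
    by unfold_locales (use assms in auto)
  obtain s where s: "s \<le> nloops k S0 S1"
    and e: "card (G_orbit (Ggroup k S1 S2 c) S0) * 2 ^ s = 2 ^ card (loops k S1 S2)"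
    using main_count[OF assms(7)] by blast
  define oc where "oc = card (G_orbit (Ggroup k S1 S2 c) S0)"
  define l where "l = card (loops k S1 S2)"
  define n where "n = nloops k S0 S1"
  have sz: "size \<mu> = l" unfolding l_def using assms(5) unfolding loop_type_def
    by (metis size_image_mset size_mset_set)
  have e2: "oc * 2 ^ s = 2 ^ l" using e unfolding oc_def l_def .
  have o0: "oc \<noteq> 0" using e2 by (metis mult_is_0 power_not_zero zero_neq_numeral)
  have h: "(of_nat oc :: rat) * 2 ^ s = 2 ^ l"
    by (metis e2 of_nat_mult of_nat_numeral of_nat_power)
  have hn: "(2::rat) ^ n = 2 ^ (n - s) * 2 ^ s" using s unfolding n_def
    by (simp add: power_add[symmetric])
  have "(2::rat) ^ n / 2 ^ l * of_nat oc = 2 ^ (n - s) * 2 ^ s / (of_nat oc * 2 ^ s) * of_nat oc"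
    using h hn by simp
  also have "\<dots> = 2 ^ (n - s)" using o0 by (simp add: field_simps)
  also have "\<dots> = of_int (2 ^ (n - s))" by simp
  finally have "(2::rat) ^ n / 2 ^ l * of_nat oc \<in> \<int>" by (metis Ints_of_int)
  then show ?thesis unfolding n_def oc_def sz[symmetric] .
qed

end
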